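(* Let $w_1,w_2,w_3>0$ and let $D$ be the real symmetric $4\times4$ matrix with $D_{i,i+1}=D_{i+1,i}=w_i^{-1}$ for $i=1,2,3$ and all other entries $0$. Let $\lambda=d^D(1,4)$. If $w_2>\sqrt{w_1w_3}$ then $$\lambda=\frac{\sqrt{w_1^2+w_2^2}\,\sqrt{w_3^2+w_2^2}}{w_2},$$ and if $w_2\le\sqrt{w_1w_3}$ then $\lambda=w_1+w_3$.
   Context: For a self-adjoint $n\times n$ matrix $M$, $d^M(i,j)=\sup\{|a(i)-a(j)| : a\in\mathbb{C}^n,\ \|[M,\pi(a)]\|\le 1\}$, where $\pi(a)=\mathrm{diag}(a(1),\dots,a(n))$ and $\|\cdot\|$ is the operator norm. *)

theory Defs
  imports "HOL-Analysis.Analysis" "HOL-Library.Numeral_Type"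
begin

definition diag_mat :: "complex ^ 'n \<Rightarrow> complex ^ 'n ^ 'n" where
  "diag_mat a = (\<chi> i j. if i = j then a $ i else 0)"

definition op_norm :: "complex ^ 'n ^ 'n \<Rightarrow> real" where
  "op_norm A = onorm (\<lambda>x. A *v x)"

definition commutator :: "complex ^ 'n ^ 'n \<Rightarrow> complex ^ 'n ^ 'n \<Rightarrow> complex ^ 'n ^ 'n" where
  "commutator A B = A ** B - B ** A"

definition connes_dist :: "complex ^ 'n ^ 'n \<Rightarrow> 'n \<Rightarrow> 'n \<Rightarrow> real" where
  "connes_dist M i j =
     Sup {cmod (a $ i - a $ j) | a. op_norm (commutator M (diag_mat a)) \<le> 1}"

(* The 4x4 tridiagonal matrix D; index type 4 has elements 0,1,2,3 which
   correspond to the paper's indices 1,2,3,4 *)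
definition D4 :: "real \<Rightarrow> real \<Rightarrow> real \<Rightarrow> complex ^ 4 ^ 4" where
  "D4 w1 w2 w3 = (\<chi> i j.
      if {i, j} = {0, 1} then complex_of_real (1 / w1)
      else if {i, j} = {1, 2} then complex_of_real (1 / w2)
      else if {i, j} = {2, 3} then complex_of_real (1 / w3)
      else 0)"

end

theory Submission
  imports Defs
begin

lemma sum4: "sum f (UNIV::4 set) = f 0 + f 1 + f 2 + f 3"
proof -
  have "(4::4) = 0" by simp
  then have U: "(UNIV::4 set) = {0,1,2,3}" using UNIV_4 by auto
  show ?thesis by (subst U) (simp add: ac_simps)
qed

definition mk4 :: "'a \<Rightarrow> 'a \<Rightarrow> 'a \<Rightarrow> 'a \<Rightarrow> 'a ^ 4" where
  "mk4 a b c d = (\<chi> i. if i = 0 then a else if i = 1 then b else if i = 2 then c else d)"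

lemma mk4_simps[simp]: "mk4 a b c d $ 0 = a" "mk4 a b c d $ 1 = b" "mk4 a b c d $ 2 = c" "mk4 a b c d $ 3 = d"
  by (simp_all add: mk4_def)

lemma norm4: "norm (x :: complex ^ 4) ^ 2 = cmod (x$0)^2 + cmod (x$1)^2 + cmod (x$2)^2 + cmod (x$3)^2"
  unfolding norm_vec_def L2_set_def sum4 by (simp add: add_nonneg_nonneg)

lemma Cv:
  fixes a u :: "complex ^ 4" and w1 w2 w3 :: real
  defines "C \<equiv> commutator (D4 w1 w2 w3) (diag_mat a)"
  shows "(C *v u) $ 0 = of_real (1/w1) * (a$1 - a$0) * u$1"
    "(C *v u) $ 1 = - of_real (1/w1) * (a$1 - a$0) * u$0 + of_real (1/w2) * (a$2 - a$1) * u$2"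
    "(C *v u) $ 2 = - of_real (1/w2) * (a$2 - a$1) * u$1 + of_real (1/w3) * (a$3 - a$2) * u$3"
    "(C *v u) $ 3 = - of_real (1/w3) * (a$3 - a$2) * u$2"
  unfolding C_def commutator_def matrix_vector_mult_def matrix_matrix_mult_def diag_mat_def D4_def sum4
  by (simp_all add: insert_commute doubleton_eq_iff algebra_simps)


lemma norm4s: "norm (x :: complex ^ 4) = sqrt (cmod (x$0)^2 + cmod (x$1)^2 + cmod (x$2)^2 + cmod (x$3)^2)"
  unfolding norm_vec_def L2_set_def sum4 by simp

lemma opb: "norm (M *v u) \<le> op_norm M * norm (u :: complex ^ 'n)"
  unfolding op_norm_def by (rule onorm) simp

lemma cs4: "cmod (\<Sum>i\<in>UNIV. v$i * y$i) \<le> norm (v :: complex ^ 'n) * norm y"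
proof -
  have "cmod (\<Sum>i\<in>UNIV. v$i * y$i) \<le> (\<Sum>i\<in>UNIV. cmod (v$i * y$i))" by (rule norm_sum)
  also have "\<dots> = (\<Sum>i\<in>UNIV. \<bar>cmod (v$i)\<bar> * \<bar>cmod (y$i)\<bar>)" by (simp add: norm_mult)
  also have "\<dots> \<le> L2_set (\<lambda>i. cmod (v$i)) UNIV * L2_set (\<lambda>i. cmod (y$i)) UNIV"
    by (rule L2_set_mult_ineq)
  finally show ?thesis by (simp add: norm_vec_def)
qed

lemma UB:
  assumes "op_norm M \<le> 1"
  shows "cmod (\<Sum>i\<in>UNIV. v$i * (M *v u)$i) \<le> norm (v :: complex ^ 'n) * norm u"
proof -
  have "cmod (\<Sum>i\<in>UNIV. v$i * (M *v u)$i) \<le> norm v * norm (M *v u)" by (rule cs4)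
  also have "\<dots> \<le> norm v * (op_norm M * norm u)" by (intro mult_left_mono opb) simp
  also have "\<dots> \<le> norm v * norm u" using assms
    using mult_right_mono[of "op_norm M" 1 "norm u"] by (intro mult_left_mono) auto
  finally show ?thesis .
qed

lemma ident1:
  fixes a :: "complex ^ 4" and w1 w2 w3 :: real
  assumes w: "w1 > 0" "w2 > 0" "w3 > 0"
  shows "(\<Sum>i\<in>UNIV. mk4 0 (- of_real w2) 0 (of_real w3) $i * (commutator (D4 w1 w2 w3) (diag_mat a) *v mk4 (of_real w1) 0 (- of_real w2) 0)$i) = of_real w2 * (a$3 - a$0)"
  unfolding sum4 Cv using w by (simp add: algebra_simps)


lemma UB1:
  fixes a :: "complex ^ 4" and w1 w2 w3 :: real
  assumes w: "w1 > 0" "w2 > 0" "w3 > 0"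
  and op: "op_norm (commutator (D4 w1 w2 w3) (diag_mat a)) \<le> 1"
  shows "cmod (a$3 - a$0) \<le> sqrt (w1^2 + w2^2) * sqrt (w3^2 + w2^2) / w2"
proof -
  let ?C = "commutator (D4 w1 w2 w3) (diag_mat a)"
  define u :: "complex^4" where "u = mk4 (of_real w1) 0 (- of_real w2) 0"
  define v :: "complex^4" where "v = mk4 0 (- of_real w2) 0 (of_real w3)"
  have "(\<Sum>i\<in>UNIV. v$i * (?C *v u)$i) = of_real w2 * (a$3 - a$0)"
    unfolding u_def v_def using ident1[OF w] .
  then have "cmod (of_real w2 * (a$3 - a$0)) \<le> norm v * norm u" using UB[OF op, of v u] by simp
  moreover have "norm u = sqrt (w1^2 + w2^2)" "norm v = sqrt (w3^2 + w2^2)"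
    unfolding norm4s u_def v_def by (simp_all add: ac_simps)
  ultimately have "w2 * cmod (a$3 - a$0) \<le> sqrt (w1^2 + w2^2) * sqrt (w3^2 + w2^2)"
    using w by (simp add: norm_mult mult.commute)
  then show ?thesis using w by (simp add: field_simps)
qed

lemma ident2:
  fixes a :: "complex ^ 4" and w1 w2 w3 :: real
  assumes w: "w1 > 0" "w2 > 0" "w3 > 0"
  shows "(\<Sum>i\<in>UNIV. mk4 0 (- of_real w1) 0 (of_real w2) $i * (commutator (D4 w1 w2 w3) (diag_mat a) *v mk4 (of_real w1) 0 (- of_real w2) 0)$i)
     + (\<Sum>i\<in>UNIV. mk4 0 0 0 (- of_real (w1 * w3 - w2^2)) $i * (commutator (D4 w1 w2 w3) (diag_mat a) *v mk4 0 0 1 0)$i) = of_real w1 * (a$3 - a$0)"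
  unfolding sum4 Cv using w by (simp add: algebra_simps power2_eq_square)

lemma UB2:
  fixes a :: "complex ^ 4" and w1 w2 w3 :: real
  assumes w: "w1 > 0" "w2 > 0" "w3 > 0" and le: "w2^2 \<le> w1 * w3"
  and op: "op_norm (commutator (D4 w1 w2 w3) (diag_mat a)) \<le> 1"
  shows "cmod (a$3 - a$0) \<le> w1 + w3"
proof -
  let ?C = "commutator (D4 w1 w2 w3) (diag_mat a)"
  define u :: "complex^4" where "u = mk4 (of_real w1) 0 (- of_real w2) 0"
  define v :: "complex^4" where "v = mk4 0 (- of_real w1) 0 (of_real w2)"
  define u' :: "complex^4" where "u' = mk4 0 0 1 0"
  define c where "c = w1 * w3 - w2^2"
  have c0: "c \<ge> 0" using le unfolding c_def by simp
  define v' :: "complex^4" where "v' = mk4 0 0 0 (- of_real c)"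
  define S1 where "S1 = (\<Sum>i\<in>UNIV. v$i * (?C *v u)$i)"
  define S2 where "S2 = (\<Sum>i\<in>UNIV. v'$i * (?C *v u')$i)"
  have e: "S1 + S2 = of_real w1 * (a$3 - a$0)"
    unfolding S1_def S2_def u_def v_def u'_def v'_def c_def using ident2[OF w] .
  have t: "cmod (S1 + S2) \<le> cmod S1 + cmod S2" by (rule norm_triangle_ineq)
  have b1: "cmod S1 \<le> norm v * norm u" unfolding S1_def by (rule UB[OF op])
  have b2: "cmod S2 \<le> norm v' * norm u'" unfolding S2_def by (rule UB[OF op])
  have n: "norm u = sqrt (w1^2 + w2^2)" "norm v = sqrt (w1^2 + w2^2)" "norm u' = 1"
     "norm v' = w1 * w3 - w2^2"
    unfolding norm4s u_def v_def u'_def v'_def using c0 by (simp_all add: ac_simps c_def[symmetric])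
  have "cmod (of_real w1 * (a$3 - a$0)) \<le> (w1^2 + w2^2) + (w1 * w3 - w2^2)"
    using t b1 b2 unfolding e n by simp
  moreover have "cmod (of_real w1 * (a$3 - a$0)) = w1 * cmod (a$3 - a$0)" using w by (simp add: norm_mult)
  moreover have "(w1^2 + w2^2) + (w1 * w3 - w2^2) = w1 * (w1 + w3)" by (simp add: power2_eq_square algebra_simps)
  ultimately have "w1 * cmod (a$3 - a$0) \<le> w1 * (w1 + w3)" by linarith
  then show ?thesis using w by simp
qed

lemma form_nonneg:
  fixes p q P R y z :: real
  assumes "p^2 + P = 1" "0 \<le> P" "0 \<le> R" "q^2 \<le> P * R"
  shows "0 \<le> P * y^2 + (R - q^2) * z^2 + 2*p*q*y*z"
proof (cases "P = 0")
  case True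
  then have "q^2 \<le> 0" using assms by simp
  then have "q = 0" by simp
  then show ?thesis using assms by simp
next
  case False
  then have Pp: "P > 0" using assms by simp
  have "P * (P * y^2 + (R - q^2) * z^2 + 2*p*q*y*z) = (P*y + p*q*z)^2 + (P*R - q^2)*z^2"
  proof -
    have "(P*y + p*q*z)^2 + (P*R - q^2)*z^2 - P * (P * y^2 + (R - q^2) * z^2 + 2*p*q*y*z)
        = q^2 * z^2 * (p^2 + P - 1)" by (simp add: power2_eq_square algebra_simps)
    then show ?thesis using assms(1) by simp
  qed
  also have "\<dots> \<ge> 0" using assms by simp
  finally show ?thesis using Pp by (simp add: zero_le_mult_iff)
qed

lemma ACH:
  fixes a :: "complex ^ 4" and w1 w2 w3 p q r :: real
  assumes w: "w1 > 0" "w2 > 0" "w3 > 0"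
    and pr: "p^2 \<le> 1" "r^2 \<le> 1" "q^2 \<le> (1-p^2)*(1-r^2)"
    and a1: "a$1 - a$0 = of_real (w1*p)" and a2: "a$2 - a$1 = of_real (w2*q)"
    and a3: "a$3 - a$2 = of_real (w3*r)"
  shows "op_norm (commutator (D4 w1 w2 w3) (diag_mat a)) \<le> 1"
  unfolding op_norm_def
proof (rule onorm_le)
  fix u :: "complex^4"
  let ?C = "commutator (D4 w1 w2 w3) (diag_mat a)"
  have x1: "complex_of_real (1/w1) * (a$1 - a$0) = of_real p"
    unfolding a1 of_real_mult[symmetric] using w by simp
  have x2: "complex_of_real (1/w2) * (a$2 - a$1) = of_real q"
    unfolding a2 of_real_mult[symmetric] using w by simp
  have x3: "complex_of_real (1/w3) * (a$3 - a$2) = of_real r"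
    unfolding a3 of_real_mult[symmetric] using w by simp
  have c: "(?C *v u)$0 = of_real p * u$1" "(?C *v u)$1 = - of_real p * u$0 + of_real q * u$2"
     "(?C *v u)$2 = - of_real q * u$1 + of_real r * u$3" "(?C *v u)$3 = - of_real r * u$2"
    unfolding Cv minus_mult_left x1 x2 x3 using w by (simp_all add: a1 a2 a3)
  have F1: "0 \<le> (1-p^2) * Re(u$0)^2 + ((1-r^2) - q^2) * Re(u$2)^2 + 2*p*q*Re(u$0)*Re(u$2)"
    by (rule form_nonneg) (use pr in auto)
  have F2: "0 \<le> (1-p^2) * Im(u$0)^2 + ((1-r^2) - q^2) * Im(u$2)^2 + 2*p*q*Im(u$0)*Im(u$2)"
    by (rule form_nonneg) (use pr in auto)
  have F3: "0 \<le> (1-r^2) * Re(u$3)^2 + ((1-p^2) - q^2) * Re(u$1)^2 + 2*r*q*Re(u$3)*Re(u$1)"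
    by (rule form_nonneg) (use pr in \<open>auto simp: mult.commute\<close>)
  have F4: "0 \<le> (1-r^2) * Im(u$3)^2 + ((1-p^2) - q^2) * Im(u$1)^2 + 2*r*q*Im(u$3)*Im(u$1)"
    by (rule form_nonneg) (use pr in \<open>auto simp: mult.commute\<close>)
  have "norm u ^2 - norm (?C *v u) ^2 =
     ((1-p^2) * Re(u$0)^2 + ((1-r^2) - q^2) * Re(u$2)^2 + 2*p*q*Re(u$0)*Re(u$2))
   + ((1-p^2) * Im(u$0)^2 + ((1-r^2) - q^2) * Im(u$2)^2 + 2*p*q*Im(u$0)*Im(u$2))
   + ((1-r^2) * Re(u$3)^2 + ((1-p^2) - q^2) * Re(u$1)^2 + 2*r*q*Re(u$3)*Re(u$1))
   + ((1-r^2) * Im(u$3)^2 + ((1-p^2) - q^2) * Im(u$1)^2 + 2*r*q*Im(u$3)*Im(u$1))"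
    unfolding norm4 c cmod_power2 by (simp add: power2_eq_square algebra_simps)
  then have "norm (?C *v u) ^2 \<le> norm u ^2" using F1 F2 F3 F4 by linarith
  then have "norm (?C *v u) \<le> norm u" by (rule power2_le_imp_le) simp
  then show "norm (?C *v u) \<le> 1 * norm u" by simp
qed

lemma opt_vals:
  fixes w1 w2 w3 A B :: real
  assumes w: "w1 > 0" "w2 > 0" "w3 > 0" and AB: "A > 0" "B > 0" "A^2 = w1^2 + w2^2" "B^2 = w3^2 + w2^2"
    and le: "w1 * w3 \<le> w2^2"
  shows "(w1*B/(w2*A))^2 \<le> 1" "(w3*A/(w2*B))^2 \<le> 1"
    "((w2^4 - w1^2*w3^2)/(w2^2*A*B))^2 \<le> (1 - (w1*B/(w2*A))^2) * (1 - (w3*A/(w2*B))^2)"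
    "w1*(w1*B/(w2*A)) + w2*((w2^4 - w1^2*w3^2)/(w2^2*A*B)) + w3*(w3*A/(w2*B)) = A*B/w2"
proof -
  have K: "(w1*w3)^2 \<le> (w2^2)^2" using le w by (intro power_mono) auto
  have K': "w1^2*w3^2 \<le> w2^4" using K by (simp add: power_mult_distrib power_mult[symmetric])
  have n1: "w2^2*A^2 - w1^2*B^2 = w2^4 - w1^2*w3^2"
    unfolding AB by (simp add: algebra_simps power4_eq_xxxx power2_eq_square)
  have "1 - (w1*B/(w2*A))^2 = (w2^2*A^2 - w1^2*B^2)/(w2^2*A^2)"
    using w \<open>A > 0\<close> by (simp add: field_simps power_mult_distrib)
  then have e1: "1 - (w1*B/(w2*A))^2 = (w2^4 - w1^2*w3^2)/(w2^2*A^2)" unfolding n1 .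
  have n2: "w2^2*B^2 - w3^2*A^2 = w2^4 - w1^2*w3^2"
    unfolding AB by (simp add: algebra_simps power4_eq_xxxx power2_eq_square)
  have "1 - (w3*A/(w2*B))^2 = (w2^2*B^2 - w3^2*A^2)/(w2^2*B^2)"
    using w \<open>B > 0\<close> by (simp add: field_simps power_mult_distrib)
  then have e2: "1 - (w3*A/(w2*B))^2 = (w2^4 - w1^2*w3^2)/(w2^2*B^2)" unfolding n2 .
  have "0 \<le> 1 - (w1*B/(w2*A))^2" unfolding e1 using K' by simp
  then show "(w1*B/(w2*A))^2 \<le> 1" by simp
  have "0 \<le> 1 - (w3*A/(w2*B))^2" unfolding e2 using K' by simp
  then show "(w3*A/(w2*B))^2 \<le> 1" by simp
  show "((w2^4 - w1^2*w3^2)/(w2^2*A*B))^2 \<le> (1 - (w1*B/(w2*A))^2) * (1 - (w3*A/(w2*B))^2)"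
  proof -
    have "((w2^4 - w1^2*w3^2)/(w2^2*A*B))^2 = ((w2^4 - w1^2*w3^2)/(w2^2*A^2)) * ((w2^4 - w1^2*w3^2)/(w2^2*B^2))"
      using w \<open>A > 0\<close> \<open>B > 0\<close> by (simp add: power_mult_distrib power2_eq_square)
    then show ?thesis unfolding e1 e2 by simp
  qed
  show "w1*(w1*B/(w2*A)) + w2*((w2^4 - w1^2*w3^2)/(w2^2*A*B)) + w3*(w3*A/(w2*B)) = A*B/w2"
  proof -
    have "w1*(w1*B/(w2*A)) + w2*((w2^4 - w1^2*w3^2)/(w2^2*A*B)) + w3*(w3*A/(w2*B))
        = (w1^2*B^2 + w3^2*A^2 + (w2^4 - w1^2*w3^2)) / (w2*A*B)"
      using w \<open>A > 0\<close> \<open>B > 0\<close> by (simp add: field_simps power2_eq_square power4_eq_xxxx)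
    also have "w1^2*B^2 + w3^2*A^2 + (w2^4 - w1^2*w3^2) = A^2 * B^2"
      unfolding AB by (simp add: algebra_simps power2_eq_square power4_eq_xxxx)
    finally show ?thesis using w \<open>A > 0\<close> \<open>B > 0\<close> by (simp add: field_simps power2_eq_square)
  qed
qed

lemma dist_eq:
  fixes w1 w2 w3 L :: real
  assumes w: "w1 > 0" "w2 > 0" "w3 > 0"
    and ub: "\<And>a. op_norm (commutator (D4 w1 w2 w3) (diag_mat a)) \<le> 1 \<Longrightarrow> cmod (a$3 - a$0) \<le> L"
    and ex: "op_norm (commutator (D4 w1 w2 w3) (diag_mat b)) \<le> 1" "cmod (b$3 - b$0) = L"
  shows "connes_dist (D4 w1 w2 w3) 0 3 = L"
  unfolding connes_dist_def
proof (rule cSup_eq_maximum)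
  show "L \<in> {cmod (a $ 0 - a $ 3) |a. op_norm (commutator (D4 w1 w2 w3) (diag_mat a)) \<le> 1}"
    using ex by (auto simp: norm_minus_commute)
  fix x assume "x \<in> {cmod (a $ 0 - a $ 3) |a. op_norm (commutator (D4 w1 w2 w3) (diag_mat a)) \<le> 1}"
  then obtain a where "x = cmod (a $ 0 - a $ 3)" "op_norm (commutator (D4 w1 w2 w3) (diag_mat a)) \<le> 1"
    by blast
  then show "x \<le> L" using ub[of a] by (simp add: norm_minus_commute)
qed

theorem mainTheorem5:
  fixes w1 w2 w3 :: real
  assumes "w1 > 0" and "w2 > 0" and "w3 > 0"
  shows "(w2 > sqrt (w1 * w3) \<longrightarrow>
            connes_dist (D4 w1 w2 w3) 0 3 =
              sqrt (w1^2 + w2^2) * sqrt (w3^2 + w2^2) / w2)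
       \<and> (w2 \<le> sqrt (w1 * w3) \<longrightarrow>
            connes_dist (D4 w1 w2 w3) 0 3 = w1 + w3)"
proof (intro conjI impI)
  note w = assms
  have s2: "sqrt (w1 * w3) ^ 2 = w1 * w3" using w by (simp add: less_imp_le)
  assume gt: "w2 > sqrt (w1 * w3)"
  have le: "w1 * w3 \<le> w2^2"
  proof -
    have "sqrt (w1 * w3) ^ 2 \<le> w2 ^ 2" using gt w by (intro power_mono) (auto simp: less_imp_le)
    then show ?thesis using s2 by simp
  qed
  define A where "A = sqrt (w1^2 + w2^2)"
  define B where "B = sqrt (w3^2 + w2^2)"
  have AB: "A > 0" "B > 0" "A^2 = w1^2 + w2^2" "B^2 = w3^2 + w2^2"
    unfolding A_def B_def using w by (auto simp: add_pos_pos)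
  define p where "p = w1*B/(w2*A)"
  define r where "r = w3*A/(w2*B)"
  define q where "q = (w2^4 - w1^2*w3^2)/(w2^2*A*B)"
  note ov = opt_vals[OF w AB le, folded p_def q_def r_def]
  define b :: "complex^4" where
    "b = mk4 0 (of_real (w1*p)) (of_real (w1*p + w2*q)) (of_real (w1*p + w2*q + w3*r))"
  have "op_norm (commutator (D4 w1 w2 w3) (diag_mat b)) \<le> 1"
    by (rule ACH[OF w ov(1) ov(2) ov(3)]) (simp_all add: b_def)
  moreover have "cmod (b$3 - b$0) = A*B/w2"
  proof -
    have "b$3 - b$0 = of_real (A*B/w2)" unfolding b_def ov(4)[symmetric] by simp
    then have "cmod (b$3 - b$0) = \<bar>A*B/w2\<bar>" by (simp only: norm_of_real)
    then show ?thesis using AB w by simp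
  qed
  ultimately show "connes_dist (D4 w1 w2 w3) 0 3 = sqrt (w1^2 + w2^2) * sqrt (w3^2 + w2^2) / w2"
    using dist_eq[OF w UB1[OF w]] unfolding A_def B_def by blast
next
  note w = assms
  assume lq: "w2 \<le> sqrt (w1 * w3)"
  have le: "w2^2 \<le> w1 * w3"
  proof -
    have "w2 ^ 2 \<le> sqrt (w1 * w3) ^ 2" using lq w by (intro power_mono) auto
    then show ?thesis using w by simp
  qed
  define b :: "complex^4" where
    "b = mk4 0 (of_real (w1*1)) (of_real (w1*1 + w2*0)) (of_real (w1*1 + w2*0 + w3*1))"
  have "op_norm (commutator (D4 w1 w2 w3) (diag_mat b)) \<le> 1"
    by (rule ACH[OF w, of 1 1 0]) (simp_all add: b_def)
  moreover have "cmod (b$3 - b$0) = w1 + w3"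
  proof -
    have "b$3 - b$0 = of_real (w1 + w3)" unfolding b_def by simp
    then have "cmod (b$3 - b$0) = \<bar>w1 + w3\<bar>" by (simp only: norm_of_real)
    then show ?thesis using w by simp
  qed
  ultimately show "connes_dist (D4 w1 w2 w3) 0 3 = w1 + w3"
    using dist_eq[OF w UB2[OF w le]] by blast
qed

end
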